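(* The generating function $$F_{(123,132)}(x,p,q,u,v,s,t)=\sum_{n\ge0}\ \sum_{\pi\in S_n(123,132)} x^n p^{\operatorname{asc}(\pi)}q^{\operatorname{des}(\pi)}u^{\operatorname{lrmax}(\pi)}v^{\operatorname{rlmax}(\pi)}s^{\operatorname{lrmin}(\pi)}t^{\operatorname{rlmin}(\pi)}$$ is equal to $$\frac{1 + q^2 s^2 v x^2 + s t u v x (1 + p t u x) - q s x \bigl(1 + p u v^2 x^2 s t(-1 + t)(-1 + u) + v (1 + p x + s t u x)\bigr)}{1 + q^2 s^2 v x^2 - q s x (1 + v + p v x)}.$$
   Context: For $n\ge 0$, $S_n$ denotes the set of permutations $\pi=\pi_1\cdots\pi_n$ of $[n]=\{1,\dots,n\}$ ($S_0$ consists of the empty permutation, for which all statistics are $0$). $\pi$ avoids a pattern $\tau\in S_k$ if no subsequence $\pi_{i_1}\cdots\pi_{i_k}$ ($i_1<\dots<i_k$) satisfies $\pi_{i_a}<\pi_{i_b}\iff\tau_a<\tau_b$; $S_n(\tau,\rho)$ is the set of permutations in $S_n$ avoiding both $\tau$ and $\rho$. $\operatorname{asc}(\pi)$ (resp. $\operatorname{des}(\pi)$) is the number of $i\in[n-1]$ with $\pi_i<\pi_{i+1}$ (resp. $\pi_i>\pi_{i+1}$). $\pi_i$ is a left-to-right maximum (resp. minimum) if it is larger (resp. smaller) than every $\pi_j$ with $j<i$, and a right-to-left maximum (resp. minimum) if it is larger (resp. smaller) than every $\pi_j$ with $j>i$; $\operatorname{lrmax},\operatorname{lrmin},\operatorname{rlmax},\operatorname{rlmin}$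 count these (so $\pi_1$ is always a left-to-right maximum and minimum, $\pi_n$ always a right-to-left maximum and minimum). *)

theory Defs
  imports Complex_Main "HOL-Computational_Algebra.Formal_Power_Series"
begin

(* Permutations of [n] in one-line notation, as lists pi_1 ... pi_n (0-indexed list positions). *)
definition perms :: "nat \<Rightarrow> nat list set" where
  "perms n = {xs. distinct xs \<and> set xs = {1..n}}"

definition contains :: "nat list \<Rightarrow> nat list \<Rightarrow> bool" where
  "contains w tau \<longleftrightarrow> (\<exists>is. length is = length tau \<and> sorted_wrt (<) is \<and>
      (\<forall>i\<in>set is. i < length w) \<and>
      (\<forall>a<length tau. \<forall>b<length tau. (w ! (is ! a) < w ! (is ! b)) \<longleftrightarrow> (tau ! a < tau ! b)))"

definition avoids :: "nat list \<Rightarrow> nat list \<Rightarrow> bool" where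
  "avoids w tau \<longleftrightarrow> \<not> contains w tau"

definition asc :: "nat list \<Rightarrow> nat" where
  "asc w = card {i. i + 1 < length w \<and> w ! i < w ! (i + 1)}"

definition des :: "nat list \<Rightarrow> nat" where
  "des w = card {i. i + 1 < length w \<and> w ! i > w ! (i + 1)}"

definition lrmax :: "nat list \<Rightarrow> nat" where
  "lrmax w = card {i. i < length w \<and> (\<forall>j<i. w ! j < w ! i)}"

definition lrmin :: "nat list \<Rightarrow> nat" where
  "lrmin w = card {i. i < length w \<and> (\<forall>j<i. w ! j > w ! i)}"

definition rlmax :: "nat list \<Rightarrow> nat" where
  "rlmax w = card {i. i < length w \<and> (\<forall>j. i < j \<and> j < length w \<longrightarrow> w ! j < w ! i)}"

definition rlmin :: "nat list \<Rightarrow> nat" where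
  "rlmin w = card {i. i < length w \<and> (\<forall>j. i < j \<and> j < length w \<longrightarrow> w ! j > w ! i)}"

(* The generating function F_{(123,132)}(x,p,q,u,v,s,t) as a formal power series in x,
   with the remaining variables specialised to arbitrary complex numbers. *)
definition F_123_132 :: "complex \<Rightarrow> complex \<Rightarrow> complex \<Rightarrow> complex \<Rightarrow> complex \<Rightarrow> complex \<Rightarrow> complex fps" where
  "F_123_132 p q u v s t = Abs_fps (\<lambda>n.
     \<Sum>w\<in>{w\<in>perms n. avoids w [1,2,3] \<and> avoids w [1,3,2]}.
        p ^ asc w * q ^ des w * u ^ lrmax w * v ^ rlmax w * s ^ lrmin w * t ^ rlmin w)"

end

theory Submission
  imports Defs
begin

unbundle fps_syntax

definition good :: "nat list \<Rightarrow> bool" where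
  "good w \<longleftrightarrow> (\<forall>i j k. i < j \<longrightarrow> j < k \<longrightarrow> k < length w \<longrightarrow> \<not> (w!i < w!j \<and> w!i < w!k))"

lemma all_less_3: "(\<forall>a<(3::nat). P a) \<longleftrightarrow> P 0 \<and> P 1 \<and> P 2"
  by (auto simp: numeral_3_eq_3 numeral_2_eq_2 less_Suc_eq)

lemma contains3_iff:
  "contains w [a,b,c] \<longleftrightarrow> (\<exists>i j k. i < j \<and> j < k \<and> k < length w \<and>
     (\<forall>x<3. \<forall>y<3. (w ! ([i,j,k] ! x) < w ! ([i,j,k] ! y)) \<longleftrightarrow> ([a,b,c] ! x < [a,b,c] ! y)))"
proof
  assume "contains w [a,b,c]"
  then obtain "is" where l: "length is = 3" and s: "sorted_wrt (<) is"
    and b: "\<forall>i\<in>set is. i < length w"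
    and c: "\<forall>x<3. \<forall>y<3. (w ! (is ! x) < w ! (is ! y)) \<longleftrightarrow> ([a,b,c] ! x < [a,b,c] ! y)"
    unfolding contains_def by (auto simp: numeral_3_eq_3)
  from l obtain i j k where e: "is = [i,j,k]"
    by (metis (no_types, opaque_lifting) length_0_conv length_Suc_conv numeral_3_eq_3)
  show "\<exists>i j k. i < j \<and> j < k \<and> k < length w \<and>
     (\<forall>x<3. \<forall>y<3. (w ! ([i,j,k] ! x) < w ! ([i,j,k] ! y)) \<longleftrightarrow> ([a,b,c] ! x < [a,b,c] ! y))"
  proof -
    have "i < j" "j < k" "k < length w" using s b unfolding e by auto
    moreover have "\<forall>x<3. \<forall>y<3. (w ! ([i,j,k] ! x) < w ! ([i,j,k] ! y)) \<longleftrightarrow> ([a,b,c] ! x < [a,b,c] ! y)"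
      using c unfolding e .
    ultimately show ?thesis by blast
  qed
next
  assume "\<exists>i j k. i < j \<and> j < k \<and> k < length w \<and>
     (\<forall>x<3. \<forall>y<3. (w ! ([i,j,k] ! x) < w ! ([i,j,k] ! y)) \<longleftrightarrow> ([a,b,c] ! x < [a,b,c] ! y))"
  then obtain i j k where h: "i < j" "j < k" "k < length w" and
    c: "\<forall>x<3. \<forall>y<3. (w ! ([i,j,k] ! x) < w ! ([i,j,k] ! y)) \<longleftrightarrow> ([a,b,c] ! x < [a,b,c] ! y)" by blast
  show "contains w [a,b,c]" unfolding contains_def
    apply (rule exI[of _ "[i,j,k]"])
    using h c by simp
qed

lemma contains123: "contains w [1,2,3] \<longleftrightarrow> (\<exists>i j k. i < j \<and> j < k \<and> k < length w \<and> w!i < w!j \<and> w!j < w!k)"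
  unfolding contains3_iff all_less_3
  apply (rule iffI)
   apply (auto simp: nth_Cons')[1]
  apply (elim exE conjE)
  subgoal for i j k
    apply (rule exI[of _ i], rule exI[of _ j], rule exI[of _ k])
    apply (simp add: nth_Cons')
    done
  done

lemma contains132: "contains w [1,3,2] \<longleftrightarrow> (\<exists>i j k. i < j \<and> j < k \<and> k < length w \<and> w!i < w!k \<and> w!k < w!j)"
  unfolding contains3_iff all_less_3
  apply (rule iffI)
   apply (auto simp: nth_Cons')[1]
  apply (elim exE conjE)
  subgoal for i j k
    apply (rule exI[of _ i], rule exI[of _ j], rule exI[of _ k])
    apply (simp add: nth_Cons')
    done
  done

lemma good_iff:
  assumes "distinct w"
  shows "(avoids w [1,2,3] \<and> avoids w [1,3,2]) \<longleftrightarrow> good w"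
proof -
  have "(contains w [1,2,3] \<or> contains w [1,3,2]) \<longleftrightarrow> \<not> good w"
  proof
    assume "contains w [1,2,3] \<or> contains w [1,3,2]"
    then show "\<not> good w" unfolding contains123 contains132 good_def by (meson less_trans)
  next
    assume "\<not> good w"
    then obtain i j k where h: "i < j" "j < k" "k < length w" "w!i < w!j" "w!i < w!k"
      unfolding good_def by blast
    have "w!j \<noteq> w!k" using assms h by (simp add: nth_eq_iff_index_eq)
    then show "contains w [1,2,3] \<or> contains w [1,3,2]"
    proof (cases "w!j < w!k")
      case True
      then have "contains w [1,2,3]" unfolding contains123 using h by blast
      then show ?thesis ..
    next
      case False
      then have "w!k < w!j" using \<open>w!j \<noteq> w!k\<close> by simp
      then have "contains w [1,3,2]" unfolding contains132 using h by blast
      then show ?thesis ..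
    qed
  qed
  then show ?thesis unfolding avoids_def by blast
qed

lemma good_map:
  assumes "\<And>x y. x \<in> set w \<Longrightarrow> y \<in> set w \<Longrightarrow> f x < f y \<longleftrightarrow> x < y"
  shows "good (map f w) \<longleftrightarrow> good w"
  unfolding good_def using assms by (auto simp: nth_map)

lemma good_Cons: "good (a # w) \<longleftrightarrow> good w \<and> (\<forall>j k. j < k \<longrightarrow> k < length w \<longrightarrow> \<not> (a < w!j \<and> a < w!k))"
proof
  assume g: "good (a # w)"
  have "good w" unfolding good_def
  proof (intro allI impI)
    fix i j k assume "i < j" "j < k" "k < length w"
    then show "\<not> (w!i < w!j \<and> w!i < w!k)"
      using g[unfolded good_def, rule_format, of "Suc i" "Suc j" "Suc k"] by simp
  qed
  moreover have "\<forall>j k. j < k \<longrightarrow> k < length w \<longrightarrow> \<not> (a < w!j \<and> a < w!k)"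
  proof (intro allI impI)
    fix j k assume "j < k" "k < length w"
    then show "\<not> (a < w!j \<and> a < w!k)"
      using g[unfolded good_def, rule_format, of 0 "Suc j" "Suc k"] by simp
  qed
  ultimately show "good w \<and> (\<forall>j k. j < k \<longrightarrow> k < length w \<longrightarrow> \<not> (a < w!j \<and> a < w!k))" ..
next
  assume h: "good w \<and> (\<forall>j k. j < k \<longrightarrow> k < length w \<longrightarrow> \<not> (a < w!j \<and> a < w!k))"
  show "good (a # w)" unfolding good_def
  proof (intro allI impI)
    fix i j k assume ij: "i < j" "j < k" "k < length (a # w)"
    then obtain j' k' where jk: "j = Suc j'" "k = Suc k'" by (metis gr0_implies_Suc le0 le_less_trans)
    show "\<not> ((a#w)!i < (a#w)!j \<and> (a#w)!i < (a#w)!k)"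
    proof (cases i)
      case 0
      then show ?thesis using h ij jk by simp
    next
      case (Suc i')
      then show ?thesis using h[THEN conjunct1, unfolded good_def, rule_format, of i' j' k'] ij jk by simp
    qed
  qed
qed



lemma card_less_Suc:
  "card {i. i < Suc m \<and> P i} = (if P 0 then 1 else 0) + card {i. i < m \<and> P (Suc i)}"
proof -
  have e: "{i. i < Suc m \<and> P i} = {i::nat. i = 0 \<and> P 0} \<union> Suc ` {i. i < m \<and> P (Suc i)}"
    by (auto simp: image_iff) (metis less_Suc_eq_0_disj)+
  have "card {i. i < Suc m \<and> P i} = card {i::nat. i = 0 \<and> P 0} + card (Suc ` {i. i < m \<and> P (Suc i)})"
    unfolding e by (subst card_Un_disjoint) auto
  also have "card (Suc ` {i. i < m \<and> P (Suc i)}) = card {i. i < m \<and> P (Suc i)}"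
    by (rule card_image) simp
  also have "card {i::nat. i = 0 \<and> P 0} = (if P 0 then 1 else 0)" by auto
  finally show ?thesis .
qed

lemma asc_Nil: "asc [] = 0" and asc_single: "asc [a] = 0"
  unfolding asc_def by auto
lemma des_Nil: "des [] = 0" and des_single: "des [a] = 0"
  unfolding des_def by auto

lemma asc_Cons2: "asc (a # b # w) = asc (b # w) + (if a < b then 1 else 0)"
proof -
  have "asc (a # b # w) = card {i. i < Suc (length w) \<and> (a#b#w) ! i < (a#b#w) ! (i+1)}"
    unfolding asc_def by (rule arg_cong[where f=card]) auto
  also have "\<dots> = (if a < b then 1 else 0) + card {i. i < length w \<and> (b#w) ! i < (b#w) ! (i+1)}"
    by (subst card_less_Suc) simp
  also have "card {i. i < length w \<and> (b#w) ! i < (b#w) ! (i+1)} = asc (b # w)"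
    unfolding asc_def by (rule arg_cong[where f=card]) auto
  finally show ?thesis by simp
qed

lemma des_Cons2: "des (a # b # w) = des (b # w) + (if b < a then 1 else 0)"
proof -
  have "des (a # b # w) = card {i. i < Suc (length w) \<and> (a#b#w) ! i > (a#b#w) ! (i+1)}"
    unfolding des_def by (rule arg_cong[where f=card]) auto
  also have "\<dots> = (if b < a then 1 else 0) + card {i. i < length w \<and> (b#w) ! i > (b#w) ! (i+1)}"
    by (subst card_less_Suc) simp
  also have "card {i. i < length w \<and> (b#w) ! i > (b#w) ! (i+1)} = des (b # w)"
    unfolding des_def by (rule arg_cong[where f=card]) auto
  finally show ?thesis by simp
qed

lemma all_shift: "(\<forall>j. Suc i < j \<and> j < Suc m \<longrightarrow> Q j) \<longleftrightarrow> (\<forall>j. i < j \<and> j < m \<longrightarrow> Q (Suc j))"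
proof
  assume h: "\<forall>j. Suc i < j \<and> j < Suc m \<longrightarrow> Q j"
  show "\<forall>j. i < j \<and> j < m \<longrightarrow> Q (Suc j)"
  proof (intro allI impI)
    fix j assume "i < j \<and> j < m"
    then show "Q (Suc j)" using h[rule_format, of "Suc j"] by simp
  qed
next
  assume h: "\<forall>j. i < j \<and> j < m \<longrightarrow> Q (Suc j)"
  show "\<forall>j. Suc i < j \<and> j < Suc m \<longrightarrow> Q j"
  proof (intro allI impI)
    fix j assume j: "Suc i < j \<and> j < Suc m"
    then obtain j' where "j = Suc j'" by (cases j) auto
    then show "Q j" using h[rule_format, of j'] j by simp
  qed
qed

lemma all_zero: "(\<forall>j. 0 < j \<and> j < Suc m \<longrightarrow> Q j) \<longleftrightarrow> (\<forall>j<m. Q (Suc j))"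
proof
  assume h: "\<forall>j. 0 < j \<and> j < Suc m \<longrightarrow> Q j"
  show "\<forall>j<m. Q (Suc j)"
  proof (intro allI impI)
    fix j assume "j < m"
    then show "Q (Suc j)" using h[rule_format, of "Suc j"] by simp
  qed
next
  assume h: "\<forall>j<m. Q (Suc j)"
  show "\<forall>j. 0 < j \<and> j < Suc m \<longrightarrow> Q j"
  proof (intro allI impI)
    fix j assume j: "0 < j \<and> j < Suc m"
    then obtain j' where "j = Suc j'" by (cases j) auto
    then show "Q j" using h[rule_format, of j'] j by simp
  qed
qed

lemma rlmax_Cons: "rlmax (a # w) = rlmax w + (if \<forall>x\<in>set w. x < a then 1 else 0)"
proof -
  have "rlmax (a # w) = card {i. i < Suc (length w) \<and> (\<forall>j. i < j \<and> j < Suc (length w) \<longrightarrow> (a#w) ! j < (a#w) ! i)}"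
    unfolding rlmax_def by simp
  also have "\<dots> = (if (\<forall>j. 0 < j \<and> j < Suc (length w) \<longrightarrow> (a#w) ! j < (a#w) ! 0) then 1 else 0)
     + card {i. i < length w \<and> (\<forall>j. Suc i < j \<and> j < Suc (length w) \<longrightarrow> (a#w) ! j < (a#w) ! Suc i)}"
    by (rule card_less_Suc)
  also have "(\<forall>j. 0 < j \<and> j < Suc (length w) \<longrightarrow> (a#w) ! j < (a#w) ! 0) \<longleftrightarrow> (\<forall>x\<in>set w. x < a)"
    unfolding all_zero by (simp add: all_set_conv_all_nth)
  also have "{i. i < length w \<and> (\<forall>j. Suc i < j \<and> j < Suc (length w) \<longrightarrow> (a#w) ! j < (a#w) ! Suc i)}
     = {i. i < length w \<and> (\<forall>j. i < j \<and> j < length w \<longrightarrow> w ! j < w ! i)}"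
    unfolding all_shift by simp
  finally show ?thesis unfolding rlmax_def by simp
qed

lemma rlmin_Cons: "rlmin (a # w) = rlmin w + (if \<forall>x\<in>set w. a < x then 1 else 0)"
proof -
  have "rlmin (a # w) = card {i. i < Suc (length w) \<and> (\<forall>j. i < j \<and> j < Suc (length w) \<longrightarrow> (a#w) ! j > (a#w) ! i)}"
    unfolding rlmin_def by simp
  also have "\<dots> = (if (\<forall>j. 0 < j \<and> j < Suc (length w) \<longrightarrow> (a#w) ! j > (a#w) ! 0) then 1 else 0)
     + card {i. i < length w \<and> (\<forall>j. Suc i < j \<and> j < Suc (length w) \<longrightarrow> (a#w) ! j > (a#w) ! Suc i)}"
    by (rule card_less_Suc)
  also have "(\<forall>j. 0 < j \<and> j < Suc (length w) \<longrightarrow> (a#w) ! j > (a#w) ! 0) \<longleftrightarrow> (\<forall>x\<in>set w. a < x)"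
    unfolding all_zero by (simp add: all_set_conv_all_nth)
  also have "{i. i < length w \<and> (\<forall>j. Suc i < j \<and> j < Suc (length w) \<longrightarrow> (a#w) ! j > (a#w) ! Suc i)}
     = {i. i < length w \<and> (\<forall>j. i < j \<and> j < length w \<longrightarrow> w ! j > w ! i)}"
    unfolding all_shift by simp
  finally show ?thesis unfolding rlmin_def by simp
qed

lemma lrmax_Cons: "lrmax (a # w) = 1 + card {i. i < length w \<and> a < w!i \<and> (\<forall>j<i. w!j < w!i)}"
  unfolding lrmax_def by (simp add: card_less_Suc All_less_Suc2)

lemma lrmin_Cons: "lrmin (a # w) = 1 + card {i. i < length w \<and> w!i < a \<and> (\<forall>j<i. w!i < w!j)}"
  unfolding lrmin_def by (simp add: card_less_Suc All_less_Suc2)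

lemma stats_map:
  assumes "\<And>x y. x \<in> set w \<Longrightarrow> y \<in> set w \<Longrightarrow> f x < f y \<longleftrightarrow> x < y"
  shows "asc (map f w) = asc w" "des (map f w) = des w" "lrmax (map f w) = lrmax w"
    "lrmin (map f w) = lrmin w" "rlmax (map f w) = rlmax w" "rlmin (map f w) = rlmin w"
proof -
  have h: "\<And>i j. i < length w \<Longrightarrow> j < length w \<Longrightarrow> f (w!i) < f (w!j) \<longleftrightarrow> w!i < w!j"
    using assms nth_mem by blast
  show "asc (map f w) = asc w" unfolding asc_def
    by (rule arg_cong[where f=card], rule Collect_cong) (simp add: h cong: conj_cong)
  show "des (map f w) = des w" unfolding des_def
    by (rule arg_cong[where f=card], rule Collect_cong) (simp add: h cong: conj_cong)
  show "lrmax (map f w) = lrmax w" unfolding lrmax_def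
    by (rule arg_cong[where f=card], rule Collect_cong) (simp add: h cong: conj_cong)
  show "lrmin (map f w) = lrmin w" unfolding lrmin_def
    by (rule arg_cong[where f=card], rule Collect_cong) (simp add: h cong: conj_cong)
  have r1: "\<And>i. i<length w \<Longrightarrow> (\<forall>j. i<j \<and> j<length w \<longrightarrow> map f w ! j < map f w ! i) \<longleftrightarrow> (\<forall>j. i<j \<and> j<length w \<longrightarrow> w!j < w!i)"
    using h by auto
  show "rlmax (map f w) = rlmax w" unfolding rlmax_def length_map
    by (rule arg_cong[where f=card], rule Collect_cong) (use r1 in blast)
  have r2: "\<And>i. i<length w \<Longrightarrow> (\<forall>j. i<j \<and> j<length w \<longrightarrow> map f w ! j > map f w ! i) \<longleftrightarrow> (\<forall>j. i<j \<and> j<length w \<longrightarrow> w!j > w!i)"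
    using h by auto
  show "rlmin (map f w) = rlmin w" unfolding rlmin_def length_map
    by (rule arg_cong[where f=card], rule Collect_cong) (use r2 in blast)
qed



definition avset :: "nat \<Rightarrow> nat list set" where
  "avset n = {w \<in> perms n. good w}"

definition raise :: "nat \<Rightarrow> nat list \<Rightarrow> nat list" where
  "raise n w = map (\<lambda>x. if x = n then Suc n else x) w"

definition lower :: "nat \<Rightarrow> nat list \<Rightarrow> nat list" where
  "lower n w = map (\<lambda>x. if x = Suc n then n else x) w"

lemma avset_0: "avset 0 = {[]}"
  unfolding avset_def perms_def good_def by auto

lemma avset_length: assumes "w \<in> avset n" shows "length w = n"
proof -
  have "distinct w" "set w = {1..n}" using assms unfolding avset_def perms_def by auto
  then have "length w = card {1..n}" using distinct_card[of w] by simp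
  then show ?thesis by simp
qed

lemma finite_avset: "finite (avset n)"
proof -
  have "avset n \<subseteq> {w. set w \<subseteq> {1..n} \<and> length w = n}"
    using avset_length unfolding avset_def perms_def by auto
  moreover have "finite {w. set w \<subseteq> {1..n} \<and> length w = n}"
    by (rule finite_lists_length_eq) simp
  ultimately show ?thesis by (rule finite_subset)
qed

lemma raise_mono:
  assumes "set w \<subseteq> {1..n}" "x \<in> set w" "y \<in> set w"
  shows "((if x = n then Suc n else x) < (if y = n then Suc n else y)) \<longleftrightarrow> x < y"
  using assms by auto

lemma lower_raise: "set w \<subseteq> {1..n} \<Longrightarrow> lower n (raise n w) = w"
  unfolding lower_def raise_def by (induct w) auto

lemma raise_lower: "n \<notin> set w \<Longrightarrow> raise n (lower n w) = w"
  unfolding lower_def raise_def by (induct w) auto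

lemma avset_SucI1: assumes "\<sigma> \<in> avset n" shows "Suc n # \<sigma> \<in> avset (Suc n)"
proof -
  have d: "distinct \<sigma>" and s: "set \<sigma> = {1..n}" and g: "good \<sigma>"
    using assms unfolding avset_def perms_def by auto
  have "\<forall>j<length \<sigma>. \<sigma> ! j \<le> n" using s nth_mem by fastforce
  then show ?thesis unfolding avset_def perms_def using d s g
    by (auto simp: good_Cons atLeastAtMostSuc_conv not_less_eq)
qed

lemma set_raise: assumes "set w = {1..n}" "n \<noteq> 0" shows "set (raise n w) = {1..n} - {n} \<union> {Suc n}"
proof -
  let ?f = "\<lambda>x. if x = n then Suc n else x"
  have e: "set (raise n w) = ?f ` {1..n}" unfolding raise_def using assms(1) by simp
  show ?thesis unfolding e
  proof (intro set_eqI iffI)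
    fix x assume "x \<in> ?f ` {1..n}" then show "x \<in> {1..n} - {n} \<union> {Suc n}" by auto
  next
    fix x assume x: "x \<in> {1..n} - {n} \<union> {Suc n}"
    show "x \<in> ?f ` {1..n}"
    proof (cases "x = Suc n")
      case True then show ?thesis using assms(2) by (intro rev_image_eqI[of n]) auto
    next
      case False then show ?thesis using x by (intro rev_image_eqI[of x]) auto
    qed
  qed
qed

lemma avset_SucI2:
  assumes "\<sigma> \<in> avset n" "n \<noteq> 0"
  shows "n # raise n \<sigma> \<in> avset (Suc n)"
proof -
  have d: "distinct \<sigma>" and s: "set \<sigma> = {1..n}" and g: "good \<sigma>"
    using assms unfolding avset_def perms_def by auto
  have s2: "set (raise n \<sigma>) = {1..n} - {n} \<union> {Suc n}" using set_raise[OF s assms(2)] .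
  have mono: "\<And>x y. x \<in> set \<sigma> \<Longrightarrow> y \<in> set \<sigma> \<Longrightarrow>
     ((if x = n then Suc n else x) < (if y = n then Suc n else y)) \<longleftrightarrow> x < y"
    using s by auto
  have d2: "distinct (raise n \<sigma>)" unfolding raise_def distinct_map
    using d s by (auto intro!: inj_onI split: if_splits)
  have g2: "good (raise n \<sigma>)" unfolding raise_def using good_map[OF mono] g by simp
  have c: "\<forall>j k. j < k \<longrightarrow> k < length (raise n \<sigma>) \<longrightarrow> \<not> (n < raise n \<sigma> ! j \<and> n < raise n \<sigma> ! k)"
  proof (intro allI impI notI)
    fix j k assume jk: "j < k" "k < length (raise n \<sigma>)" and h: "n < raise n \<sigma> ! j \<and> n < raise n \<sigma> ! k"
    have "raise n \<sigma> ! j \<in> set (raise n \<sigma>)" "raise n \<sigma> ! k \<in> set (raise n \<sigma>)" using jk by auto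
    then have "raise n \<sigma> ! j = Suc n" "raise n \<sigma> ! k = Suc n" using h s2 by auto
    then show False using d2 jk nth_eq_iff_index_eq[OF d2, of j k] by simp
  qed
  show ?thesis unfolding avset_def perms_def
    using d2 s2 g2 c assms(2) by (auto simp: good_Cons)
qed

lemma avset_SucE:
  assumes "w \<in> avset (Suc n)"
  shows "(\<exists>\<sigma>\<in>avset n. w = Suc n # \<sigma>) \<or> (n \<noteq> 0 \<and> (\<exists>\<sigma>\<in>avset n. w = n # raise n \<sigma>))"
proof -
  have d: "distinct w" and s: "set w = {1..Suc n}" and g: "good w"
    using assms unfolding avset_def perms_def by auto
  obtain a w' where w: "w = a # w'" using s by (cases w) auto
  have d': "distinct w'" "a \<notin> set w'" using d w by auto
  have s': "set w' = {1..Suc n} - {a}" and a: "a \<in> {1..Suc n}" using s d' w by auto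
  have g': "good w'" and c: "\<forall>j k. j < k \<longrightarrow> k < length w' \<longrightarrow> \<not> (a < w'!j \<and> a < w'!k)"
    using g w by (auto simp: good_Cons)
  show ?thesis
  proof (cases "a = Suc n")
    case True
    have "set w' = {1..n}" using s' True by (simp add: atLeastAtMostSuc_conv)
    then have "w' \<in> avset n" unfolding avset_def perms_def using d' g' by blast
    then show ?thesis using w True by blast
  next
    case False
    have an: "a = n"
    proof (rule ccontr)
      assume "a \<noteq> n"
      then have lt: "a < n" using False a by auto
      then have "n \<in> set w'" "Suc n \<in> set w'" using s' a by auto
      then obtain j k where j: "j < length w'" "w' ! j = n" and k: "k < length w'" "w' ! k = Suc n"
        by (metis in_set_conv_nth)
      have "j \<noteq> k" using j k by auto
      then show False
        using c[rule_format, of j k] c[rule_format, of k j] lt j k by (cases "j < k") auto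
    qed
    have n0: "n \<noteq> 0" using an a by auto
    define \<sigma> where "\<sigma> = lower n w'"
    have nw: "n \<notin> set w'" using s' an by auto
    have ww: "w = n # raise n \<sigma>" unfolding \<sigma>_def using raise_lower[OF nw] w an by simp
    have mono: "\<And>x y. x \<in> set w' \<Longrightarrow> y \<in> set w' \<Longrightarrow>
       ((if x = Suc n then n else x) < (if y = Suc n then n else y)) \<longleftrightarrow> x < y"
      using s' an by auto
    have "inj_on (\<lambda>x. if x = Suc n then n else x) (set w')"
    proof (rule inj_onI)
      fix x y assume "x \<in> set w'" "y \<in> set w'" "(if x = Suc n then n else x) = (if y = Suc n then n else y)"
      then show "x = y" using nw by (cases "x = Suc n"; cases "y = Suc n") auto
    qed
    then have "distinct \<sigma>" unfolding \<sigma>_def lower_def distinct_map using d' by blast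
    moreover have "set \<sigma> = {1..n}"
    proof -
      let ?f = "\<lambda>x. if x = Suc n then n else x"
      have e: "set \<sigma> = ?f ` set w'" unfolding \<sigma>_def lower_def by simp
      show ?thesis unfolding e
      proof (intro set_eqI iffI)
        fix x assume "x \<in> ?f ` set w'"
        then obtain y where y: "y \<in> set w'" "x = ?f y" by blast
        have "y \<in> {1..Suc n}" "y \<noteq> n" using y(1) s' an by simp_all
        then show "x \<in> {1..n}" using y(2) n0 by (cases "y = Suc n") auto
      next
        fix x assume x: "x \<in> {1..n}"
        show "x \<in> ?f ` set w'"
        proof (cases "x = n")
          case True then show ?thesis using s' an by (intro rev_image_eqI[of "Suc n"]) auto
        next
          case False then show ?thesis using x s' an by (intro rev_image_eqI[of x]) auto
        qed
      qed
    qed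
    moreover have "good \<sigma>" unfolding \<sigma>_def lower_def using good_map[OF mono] g' by simp
    ultimately have "\<sigma> \<in> avset n" unfolding avset_def perms_def by auto
    then show ?thesis using ww n0 by auto
  qed
qed

lemma avset_Suc:
  "avset (Suc n) = Cons (Suc n) ` avset n \<union> (if n = 0 then {} else (\<lambda>\<sigma>. n # raise n \<sigma>) ` avset n)"
proof (intro set_eqI iffI)
  fix w assume "w \<in> avset (Suc n)"
  from avset_SucE[OF this] show "w \<in> Cons (Suc n) ` avset n \<union> (if n = 0 then {} else (\<lambda>\<sigma>. n # raise n \<sigma>) ` avset n)"
    by auto
next
  fix w assume "w \<in> Cons (Suc n) ` avset n \<union> (if n = 0 then {} else (\<lambda>\<sigma>. n # raise n \<sigma>) ` avset n)"
  then show "w \<in> avset (Suc n)" using avset_SucI1 avset_SucI2 by (auto split: if_splits)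
qed



lemma avset_props:
  assumes "\<sigma> \<in> avset n"
  shows "distinct \<sigma>" "set \<sigma> = {1..n}" "good \<sigma>" "length \<sigma> = n"
  using assms avset_length unfolding avset_def perms_def by auto

lemma stats_single: "asc [a] = 0" "des [a] = 0" "lrmax [a] = 1" "lrmin [a] = 1" "rlmax [a] = 1" "rlmin [a] = 1"
  by (simp_all add: asc_single des_single lrmax_Cons lrmin_Cons)
     (simp_all add: rlmax_def rlmin_def)

lemma L1:
  assumes "\<sigma> \<in> avset n" "n \<noteq> 0"
  shows "asc (Suc n # \<sigma>) = asc \<sigma>" "des (Suc n # \<sigma>) = des \<sigma> + 1"
    "lrmax (Suc n # \<sigma>) = 1" "lrmin (Suc n # \<sigma>) = lrmin \<sigma> + 1"
    "rlmax (Suc n # \<sigma>) = rlmax \<sigma> + 1" "rlmin (Suc n # \<sigma>) = rlmin \<sigma>"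
proof -
  note P = avset_props[OF assms(1)]
  have le: "\<And>x. x \<in> set \<sigma> \<Longrightarrow> x \<le> n" using P by auto
  have lej: "\<And>j. j < length \<sigma> \<Longrightarrow> \<sigma> ! j \<le> n" using le nth_mem by blast
  obtain b \<sigma>' where e: "\<sigma> = b # \<sigma>'" using P assms(2) by (cases \<sigma>) auto
  have "b \<le> n" using le e by auto
  then show "asc (Suc n # \<sigma>) = asc \<sigma>" "des (Suc n # \<sigma>) = des \<sigma> + 1"
    unfolding e by (simp_all add: asc_Cons2 des_Cons2)
  have "{i. i < length \<sigma> \<and> Suc n < \<sigma> ! i \<and> (\<forall>j<i. \<sigma> ! j < \<sigma> ! i)} = {}"
  proof -
    have "\<forall>i<length \<sigma>. \<not> Suc n < \<sigma> ! i" using lej by (simp add: not_less le_SucI)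
    then show ?thesis by auto
  qed
  then show "lrmax (Suc n # \<sigma>) = 1" unfolding lrmax_Cons by simp
  have "{i. i < length \<sigma> \<and> \<sigma> ! i < Suc n \<and> (\<forall>j<i. \<sigma> ! i < \<sigma> ! j)} = {i. i < length \<sigma> \<and> (\<forall>j<i. \<sigma> ! i < \<sigma> ! j)}"
    using lej le_imp_less_Suc by blast
  then show "lrmin (Suc n # \<sigma>) = lrmin \<sigma> + 1" unfolding lrmin_Cons by (simp add: lrmin_def[of \<sigma>])
  show "rlmax (Suc n # \<sigma>) = rlmax \<sigma> + 1" unfolding rlmax_Cons using le by (simp add: le_imp_less_Suc)
  have "b \<in> set \<sigma>" using e by simp
  then have "\<not> (\<forall>x\<in>set \<sigma>. Suc n < x)" using le by force
  then show "rlmin (Suc n # \<sigma>) = rlmin \<sigma>" unfolding rlmin_Cons by simp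
qed

lemma L2:
  assumes "\<sigma> \<in> avset n" "n \<noteq> 0"
  shows "asc (n # raise n \<sigma>) = asc \<sigma> + (if hd \<sigma> = n then 1 else 0)"
    "des (n # raise n \<sigma>) = des \<sigma> + (if hd \<sigma> = n then 0 else 1)"
    "lrmax (n # raise n \<sigma>) = 2"
    "lrmin (n # raise n \<sigma>) + (if hd \<sigma> = n then 1 else 0) = lrmin \<sigma> + 1"
    "rlmax (n # raise n \<sigma>) = rlmax \<sigma>"
    "rlmin (n # raise n \<sigma>) = rlmin \<sigma> + (if n = 1 then 1 else 0)"
proof -
  note P = avset_props[OF assms(1)]
  have le: "\<And>x. x \<in> set \<sigma> \<Longrightarrow> x \<le> n" using P by auto
  have lej: "\<And>j. j < length \<sigma> \<Longrightarrow> \<sigma> ! j \<le> n" using le nth_mem by blast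
  have ge: "\<And>j. j < length \<sigma> \<Longrightarrow> 1 \<le> \<sigma> ! j" using P nth_mem by fastforce
  have mono: "\<And>x y. x \<in> set \<sigma> \<Longrightarrow> y \<in> set \<sigma> \<Longrightarrow>
     ((if x = n then Suc n else x) < (if y = n then Suc n else y)) \<longleftrightarrow> x < y"
  proof -
    fix x y assume "x \<in> set \<sigma>" "y \<in> set \<sigma>"
    then have "x \<le> n" "y \<le> n" using le by auto
    then show "((if x = n then Suc n else x) < (if y = n then Suc n else y)) \<longleftrightarrow> x < y" by auto
  qed
  have SM: "asc (raise n \<sigma>) = asc \<sigma>" "des (raise n \<sigma>) = des \<sigma>" "lrmax (raise n \<sigma>) = lrmax \<sigma>"
    "lrmin (raise n \<sigma>) = lrmin \<sigma>" "rlmax (raise n \<sigma>) = rlmax \<sigma>" "rlmin (raise n \<sigma>) = rlmin \<sigma>"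
    unfolding raise_def using stats_map[OF mono] by simp_all
  obtain b \<sigma>' where e: "\<sigma> = b # \<sigma>'" using P assms(2) by (cases \<sigma>) auto
  have bn: "b \<le> n" using le e by auto
  have rb: "raise n \<sigma> = (if b = n then Suc n else b) # raise n \<sigma>'"
    unfolding raise_def e by simp
  show "asc (n # raise n \<sigma>) = asc \<sigma> + (if hd \<sigma> = n then 1 else 0)"
    "des (n # raise n \<sigma>) = des \<sigma> + (if hd \<sigma> = n then 0 else 1)"
  proof -
    have cn: "(n < (if b = n then Suc n else b)) \<longleftrightarrow> b = n" "((if b = n then Suc n else b) < n) \<longleftrightarrow> b \<noteq> n"
      using bn by auto
    have "asc (n # raise n \<sigma>) = asc (raise n \<sigma>) + (if n < (if b = n then Suc n else b) then 1 else 0)"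
      unfolding rb by (rule asc_Cons2)
    then show "asc (n # raise n \<sigma>) = asc \<sigma> + (if hd \<sigma> = n then 1 else 0)"
      using cn SM(1) e by simp
    have "des (n # raise n \<sigma>) = des (raise n \<sigma>) + (if (if b = n then Suc n else b) < n then 1 else 0)"
      unfolding rb by (rule des_Cons2)
    then show "des (n # raise n \<sigma>) = des \<sigma> + (if hd \<sigma> = n then 0 else 1)"
      using cn SM(2) e by simp
  qed
  have ri: "\<And>i. i < length \<sigma> \<Longrightarrow> raise n \<sigma> ! i = (if \<sigma> ! i = n then Suc n else \<sigma> ! i)"
    unfolding raise_def by simp
  have lrmx: "{i. i < length (raise n \<sigma>) \<and> n < raise n \<sigma> ! i \<and> (\<forall>j<i. raise n \<sigma> ! j < raise n \<sigma> ! i)}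
      = {i. i < length \<sigma> \<and> \<sigma> ! i = n}"
  proof (intro set_eqI iffI)
    fix i assume "i \<in> {i. i < length (raise n \<sigma>) \<and> n < raise n \<sigma> ! i \<and> (\<forall>j<i. raise n \<sigma> ! j < raise n \<sigma> ! i)}"
    then have i: "i < length \<sigma>" "n < raise n \<sigma> ! i" by (auto simp: raise_def)
    then show "i \<in> {i. i < length \<sigma> \<and> \<sigma> ! i = n}" using ri[OF i(1)] lej[OF i(1)]
      by (auto split: if_splits)
  next
    fix i assume i: "i \<in> {i. i < length \<sigma> \<and> \<sigma> ! i = n}"
    have "\<forall>j<i. raise n \<sigma> ! j < raise n \<sigma> ! i"
    proof (intro allI impI)
      fix j assume "j < i"
      have jl: "j < length \<sigma>" using \<open>j < i\<close> i by auto
      have "\<sigma> ! j \<noteq> \<sigma> ! i" using nth_eq_iff_index_eq[OF P(1) jl, of i] \<open>j < i\<close> i by auto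
      note this jl
      then show "raise n \<sigma> ! j < raise n \<sigma> ! i" using i ri lej[of j] by auto
    qed
    then show "i \<in> {i. i < length (raise n \<sigma>) \<and> n < raise n \<sigma> ! i \<and> (\<forall>j<i. raise n \<sigma> ! j < raise n \<sigma> ! i)}"
      using i ri by (auto simp: raise_def)
  qed
  have "card {i. i < length \<sigma> \<and> \<sigma> ! i = n} = 1"
  proof -
    have "n \<in> set \<sigma>" using P assms(2) by auto
    then obtain i where i: "i < length \<sigma>" "\<sigma> ! i = n" by (metis in_set_conv_nth)
    have "{i. i < length \<sigma> \<and> \<sigma> ! i = n} = {i}"
      using i P(1) nth_eq_iff_index_eq by auto
    then show ?thesis by simp
  qed
  then show "lrmax (n # raise n \<sigma>) = 2" unfolding lrmax_Cons lrmx by simp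
  have "Suc n \<in> set (raise n \<sigma>)" using set_raise[OF P(2) assms(2)] assms(2) by auto
  then have "\<not> (\<forall>x\<in>set (raise n \<sigma>). x < n)" by force
  then show "rlmax (n # raise n \<sigma>) = rlmax \<sigma>" unfolding rlmax_Cons SM by simp
  show "rlmin (n # raise n \<sigma>) = rlmin \<sigma> + (if n = 1 then 1 else 0)"
  proof (cases "n = 1")
    case True
    then have "set (raise n \<sigma>) = {2}" using set_raise[OF P(2) assms(2)] by auto
    then show ?thesis unfolding rlmin_Cons SM using True by auto
  next
    case False
    then have "1 \<in> set (raise n \<sigma>)" using set_raise[OF P(2) assms(2)] assms(2) by auto
    then show ?thesis unfolding rlmin_Cons SM using False assms(2) by auto
  qed
  have lm1: "{i. i < length (raise n \<sigma>) \<and> raise n \<sigma> ! i < n \<and> (\<forall>j<i. raise n \<sigma> ! i < raise n \<sigma> ! j)}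
     = {i. i < length \<sigma> \<and> (\<forall>j<i. \<sigma> ! i < \<sigma> ! j) \<and> \<sigma> ! i \<noteq> n}"
  proof -
    have "\<And>i j. i < length \<sigma> \<Longrightarrow> j < i \<Longrightarrow> raise n \<sigma> ! i < raise n \<sigma> ! j \<longleftrightarrow> \<sigma> ! i < \<sigma> ! j"
      using ri mono by (simp add: raise_def)
    moreover have "\<And>i. i < length \<sigma> \<Longrightarrow> raise n \<sigma> ! i < n \<longleftrightarrow> \<sigma> ! i \<noteq> n"
    proof -
      fix i assume i: "i < length \<sigma>"
      show "raise n \<sigma> ! i < n \<longleftrightarrow> \<sigma> ! i \<noteq> n" using ri[OF i] lej[OF i] by auto
    qed
    ultimately have f: "\<And>i. i < length \<sigma> \<Longrightarrow> (raise n \<sigma> ! i < n \<and> (\<forall>j<i. raise n \<sigma> ! i < raise n \<sigma> ! j))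
       \<longleftrightarrow> ((\<forall>j<i. \<sigma> ! i < \<sigma> ! j) \<and> \<sigma> ! i \<noteq> n)" by blast
    have l: "length (raise n \<sigma>) = length \<sigma>" by (simp add: raise_def)
    show ?thesis unfolding l using f by blast
  qed
  have lm2: "{i. i < length \<sigma> \<and> (\<forall>j<i. \<sigma> ! i < \<sigma> ! j) \<and> \<sigma> ! i = n} = (if b = n then {0} else {})"
  proof -
    have "\<And>i. i < length \<sigma> \<Longrightarrow> (\<forall>j<i. \<sigma> ! i < \<sigma> ! j) \<and> \<sigma> ! i = n \<longleftrightarrow> i = 0 \<and> b = n"
    proof -
      fix i assume i: "i < length \<sigma>"
      show "(\<forall>j<i. \<sigma> ! i < \<sigma> ! j) \<and> \<sigma> ! i = n \<longleftrightarrow> i = 0 \<and> b = n"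
      proof (cases i)
        case 0 then show ?thesis using e by simp
      next
        case (Suc i')
        have "\<sigma> ! 0 \<le> n" using i by (intro lej) auto
        then show ?thesis using Suc by (auto dest: spec[of _ 0])
      qed
    qed
    then show ?thesis using e by auto
  qed
  have "lrmin \<sigma> = card {i. i < length \<sigma> \<and> (\<forall>j<i. \<sigma> ! i < \<sigma> ! j) \<and> \<sigma> ! i \<noteq> n}
      + card {i. i < length \<sigma> \<and> (\<forall>j<i. \<sigma> ! i < \<sigma> ! j) \<and> \<sigma> ! i = n}"
    unfolding lrmin_def
    by (subst card_Un_disjoint[symmetric]) (auto intro!: arg_cong[where f=card])
  then show "lrmin (n # raise n \<sigma>) + (if hd \<sigma> = n then 1 else 0) = lrmin \<sigma> + 1"
    unfolding lrmin_Cons lm1 lm2 using e by simp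
qed



lemma sum_split_pred:
  assumes "finite A"
  shows "sum g A = sum g {x\<in>A. P x} + sum g {x\<in>A. \<not> P x}"
proof -
  have "A = {x\<in>A. P x} \<union> {x\<in>A. \<not> P x}" by auto
  then have "sum g A = sum g ({x\<in>A. P x} \<union> {x\<in>A. \<not> P x})" by simp
  also have "\<dots> = sum g {x\<in>A. P x} + sum g {x\<in>A. \<not> P x}"
    by (rule sum.union_disjoint) (use assms in auto)
  finally show ?thesis .
qed

lemma stats_Nil: "asc [] = 0" "des [] = 0" "lrmax [] = 0" "lrmin [] = 0" "rlmax [] = 0" "rlmin [] = 0"
  unfolding asc_def des_def lrmax_def lrmin_def rlmax_def rlmin_def by simp_all

lemma avset_1: "avset (Suc 0) = {[Suc 0]}"
  using avset_Suc[of 0] avset_0 by simp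

context
  fixes p q u v s t :: complex
begin

definition wt :: "nat list \<Rightarrow> complex" where
  "wt w = p ^ asc w * q ^ des w * u ^ lrmax w * v ^ rlmax w * s ^ lrmin w * t ^ rlmin w"

definition Wt :: "nat list \<Rightarrow> complex" where
  "Wt w = p ^ asc w * q ^ des w * v ^ rlmax w * s ^ lrmin w * t ^ rlmin w"

definition ff :: "nat \<Rightarrow> complex" where
  "ff n = (\<Sum>w\<in>avset n. wt w)"

definition aa :: "nat \<Rightarrow> complex" where
  "aa n = (\<Sum>w\<in>{w\<in>avset n. hd w = n}. Wt w)"

definition bb :: "nat \<Rightarrow> complex" where
  "bb n = (\<Sum>w\<in>{w\<in>avset n. hd w \<noteq> n}. Wt w)"

lemma wt_Wt: "wt w = u ^ lrmax w * Wt w"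
  unfolding wt_def Wt_def by (simp add: algebra_simps)

lemma sum_Wt: "(\<Sum>w\<in>avset n. Wt w) = aa n + bb n"
  unfolding aa_def bb_def by (rule sum_split_pred[OF finite_avset])

lemma hd_sets:
  "{w\<in>avset (Suc n). hd w = Suc n} = Cons (Suc n) ` avset n"
  "{w\<in>avset (Suc n). hd w \<noteq> Suc n} = (if n = 0 then {} else (\<lambda>\<sigma>. n # raise n \<sigma>) ` avset n)"
  by (subst avset_Suc; auto)+

lemma inj_raise: "inj_on (\<lambda>\<sigma>. n # raise n \<sigma>) (avset n)"
proof (rule inj_onI)
  fix x y assume "x \<in> avset n" "y \<in> avset n" "n # raise n x = n # raise n y"
  then have x: "set x \<subseteq> {1..n}" and y: "set y \<subseteq> {1..n}" and r: "raise n x = raise n y"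
    using avset_props(2) by auto
  have "x = lower n (raise n x)" using lower_raise[OF x] by simp
  also have "\<dots> = lower n (raise n y)" using r by simp
  also have "\<dots> = y" using lower_raise[OF y] by simp
  finally show "x = y" .
qed

lemma aa_Suc: "aa (Suc n) = (\<Sum>\<sigma>\<in>avset n. Wt (Suc n # \<sigma>))"
proof -
  have inj: "inj_on (Cons (Suc n)) (avset n)" by (simp add: inj_on_def)
  show ?thesis unfolding aa_def hd_sets(1) sum.reindex[OF inj] comp_def ..
qed

lemma bb_Suc: "bb (Suc n) = (if n = 0 then 0 else (\<Sum>\<sigma>\<in>avset n. Wt (n # raise n \<sigma>)))"
  unfolding bb_def hd_sets(2) by (cases "n = 0") (simp_all add: sum.reindex[OF inj_raise] comp_def)

lemma ff_Suc: "ff (Suc n) = u * aa (Suc n) + u^2 * bb (Suc n)"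
proof -
  have "ff (Suc n) = (\<Sum>w\<in>{w\<in>avset (Suc n). hd w = Suc n}. wt w) + (\<Sum>w\<in>{w\<in>avset (Suc n). hd w \<noteq> Suc n}. wt w)"
    unfolding ff_def by (rule sum_split_pred[OF finite_avset])
  also have "(\<Sum>w\<in>{w\<in>avset (Suc n). hd w = Suc n}. wt w) = u * aa (Suc n)"
  proof -
    have "(\<Sum>w\<in>{w\<in>avset (Suc n). hd w = Suc n}. wt w) = (\<Sum>w\<in>{w\<in>avset (Suc n). hd w = Suc n}. u * Wt w)"
    proof (rule sum.cong[OF refl])
      fix w assume "w \<in> {w\<in>avset (Suc n). hd w = Suc n}"
      then obtain \<sigma> where "\<sigma> \<in> avset n" "w = Suc n # \<sigma>" unfolding hd_sets by auto
      then have "lrmax w = 1" using L1(3) avset_0 stats_single(3) by (cases "n = 0") auto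
      then show "wt w = u * Wt w" by (simp add: wt_Wt)
    qed
    then show ?thesis unfolding aa_def by (simp add: sum_distrib_left)
  qed
  also have "(\<Sum>w\<in>{w\<in>avset (Suc n). hd w \<noteq> Suc n}. wt w) = u^2 * bb (Suc n)"
  proof -
    have "(\<Sum>w\<in>{w\<in>avset (Suc n). hd w \<noteq> Suc n}. wt w) = (\<Sum>w\<in>{w\<in>avset (Suc n). hd w \<noteq> Suc n}. u^2 * Wt w)"
    proof (rule sum.cong[OF refl])
      fix w assume "w \<in> {w\<in>avset (Suc n). hd w \<noteq> Suc n}"
      then obtain \<sigma> where "\<sigma> \<in> avset n" "w = n # raise n \<sigma>" "n \<noteq> 0" unfolding hd_sets
        by (auto split: if_splits)
      then have "lrmax w = 2" using L2(3) by auto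
      then show "wt w = u^2 * Wt w" by (simp add: wt_Wt)
    qed
    then show ?thesis unfolding bb_def by (simp add: sum_distrib_left)
  qed
  finally show ?thesis .
qed

lemma ff_0: "ff 0 = 1"
  unfolding ff_def avset_0 wt_def by (simp add: stats_Nil)

lemma aa_1: "aa (Suc 0) = v * s * t"
proof -
  have e: "{w\<in>{[Suc 0]}. hd w = Suc 0} = {[Suc 0]}" by auto
  show ?thesis unfolding aa_def avset_1 e Wt_def by (simp add: stats_single)
qed

lemma bb_1: "bb (Suc 0) = 0"
proof -
  have e: "{w\<in>{[Suc 0]}. hd w \<noteq> Suc 0} = {}" by auto
  show ?thesis unfolding bb_def avset_1 e by simp
qed

lemma aa_rec: assumes "n \<noteq> 0" shows "aa (Suc n) = q * v * s * (aa n + bb n)"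
proof -
  have "aa (Suc n) = (\<Sum>\<sigma>\<in>avset n. q * v * s * Wt \<sigma>)"
    unfolding aa_Suc
  proof (rule sum.cong[OF refl])
    fix \<sigma> assume h: "\<sigma> \<in> avset n"
    show "Wt (Suc n # \<sigma>) = q * v * s * Wt \<sigma>"
      unfolding Wt_def L1[OF h assms] by (simp add: algebra_simps)
  qed
  then show ?thesis by (simp add: sum_distrib_left[symmetric] sum_Wt)
qed

lemma bb_rec: assumes "n \<noteq> 0" shows "bb (Suc n) = p * (if n = 1 then t else 1) * aa n + q * s * bb n"
proof -
  have "bb (Suc n) = (\<Sum>\<sigma>\<in>avset n. Wt (n # raise n \<sigma>))" using assms by (simp add: bb_Suc)
  also have "\<dots> = (\<Sum>\<sigma>\<in>avset n. if hd \<sigma> = n then p * (if n = 1 then t else 1) * Wt \<sigma> else q * s * Wt \<sigma>)"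
  proof (rule sum.cong[OF refl])
    fix \<sigma> assume h: "\<sigma> \<in> avset n"
    note L = L2[OF h assms]
    show "Wt (n # raise n \<sigma>) = (if hd \<sigma> = n then p * (if n = 1 then t else 1) * Wt \<sigma> else q * s * Wt \<sigma>)"
    proof (cases "hd \<sigma> = n")
      case True
      then have "lrmin (n # raise n \<sigma>) = lrmin \<sigma>" using L(4) by simp
      then show ?thesis unfolding Wt_def L(1,2,5,6) using True by (simp add: algebra_simps)
    next
      case False
      have "n \<noteq> 1"
      proof
        assume "n = 1"
        then have "\<sigma> = [Suc 0]" using h avset_1 by simp
        then show False using False \<open>n = 1\<close> by simp
      qed
      moreover have "lrmin (n # raise n \<sigma>) = lrmin \<sigma> + 1" using L(4) False by simp
      ultimately show ?thesis unfolding Wt_def L(1,2,5,6) using False by (simp add: algebra_simps)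
    qed
  qed
  also have "\<dots> = (\<Sum>\<sigma>\<in>{\<sigma>\<in>avset n. hd \<sigma> = n}. p * (if n = 1 then t else 1) * Wt \<sigma>)
      + (\<Sum>\<sigma>\<in>{\<sigma>\<in>avset n. hd \<sigma> \<noteq> n}. q * s * Wt \<sigma>)"
    (is "?L = ?R")
  proof -
    have "?L = (\<Sum>\<sigma>\<in>{\<sigma>\<in>avset n. hd \<sigma> = n}. if hd \<sigma> = n then p * (if n = 1 then t else 1) * Wt \<sigma> else q * s * Wt \<sigma>)
      + (\<Sum>\<sigma>\<in>{\<sigma>\<in>avset n. hd \<sigma> \<noteq> n}. if hd \<sigma> = n then p * (if n = 1 then t else 1) * Wt \<sigma> else q * s * Wt \<sigma>)"
      by (rule sum_split_pred[OF finite_avset])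
    also have "\<dots> = ?R"
      by (intro arg_cong2[where f="(+)"] sum.cong) auto
    finally show ?thesis .
  qed
  also have "\<dots> = p * (if n = 1 then t else 1) * aa n + q * s * bb n"
    unfolding aa_def bb_def by (simp add: sum_distrib_left)
  finally show ?thesis .
qed

end


lemma F_eq: "F_123_132 p q u v s t = Abs_fps (ff p q u v s t)"
proof -
  have "\<And>n. {w\<in>perms n. avoids w [1,2,3] \<and> avoids w [1,3,2]} = avset n"
    unfolding avset_def using good_iff unfolding perms_def by blast
  then show ?thesis unfolding F_123_132_def ff_def wt_def by simp
qed

lemma ff_rec:
  fixes p q u v s t :: complex
  assumes "2 \<le> n"
  shows "ff p q u v s t (Suc (Suc n)) = q*s*(1+v) * ff p q u v s t (Suc n) - (q^2*s^2*v - q*s*p*v) * ff p q u v s t n"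
proof -
  let ?a = "aa p q v s t" and ?b = "bb p q v s t"
  have n0: "n \<noteq> 0" "Suc n \<noteq> 0" "n \<noteq> 1" "Suc n \<noteq> 1" using assms by auto
  obtain m where m: "n = Suc m" using n0 by (cases n) auto
  have a1: "?a (Suc n) = q*v*s*(?a n + ?b n)" by (rule aa_rec[OF n0(1)])
  have b1: "?b (Suc n) = p * ?a n + q*s* ?b n" using bb_rec[OF n0(1)] n0(3) by simp
  have a2: "?a (Suc (Suc n)) = q*v*s*(?a (Suc n) + ?b (Suc n))" by (rule aa_rec[OF n0(2)])
  have b2: "?b (Suc (Suc n)) = p * ?a (Suc n) + q*s* ?b (Suc n)" using bb_rec[OF n0(2)] n0(4) by simp
  have f0: "ff p q u v s t n = u * ?a n + u^2 * ?b n" unfolding m by (rule ff_Suc)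
  show ?thesis unfolding ff_Suc f0 a2 b2 a1 b1 by (simp add: algebra_simps power2_eq_square)
qed



lemma main_mult:
  fixes p q u v s t :: complex
  defines "tr \<equiv> q*s*(1+v)" and "dt \<equiv> q^2*s^2*v - q*s*p*v"
  defines "n1 \<equiv> s*t*u*v - q*s*(1+v)"
      and "n2 \<equiv> q^2*s^2*v + s*t*u*v*p*t*u - q*s*v*(p + s*t*u)"
      and "n3 \<equiv> - (q*s*p*u*v^2*s*t*(t-1)*(u-1))"
  shows "Abs_fps (ff p q u v s t) * (1 - fps_const tr * fps_X + fps_const dt * fps_X^2)
    = 1 + fps_const n1 * fps_X + fps_const n2 * fps_X^2 + fps_const n3 * fps_X^3"
proof -
  let ?f = "ff p q u v s t" and ?a = "aa p q v s t" and ?b = "bb p q v s t"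
  let ?G = "Abs_fps ?f"
  have e: "?G * (1 - fps_const tr * fps_X + fps_const dt * fps_X^2)
     = ?G - fps_const tr * (fps_X * ?G) + fps_const dt * (fps_X^2 * ?G)"
    by (simp add: algebra_simps)
  have f0: "?f 0 = 1" by (rule ff_0)
  have f1: "?f 1 = u*v*s*t" using ff_Suc[where n=0 and p=p and q=q and u=u and v=v and s=s and t=t] aa_1 bb_1 by simp
  have a2: "?a 2 = q*v*s*(v*s*t)" using aa_rec[where n=1 and p=p and q=q and v=v and s=s and t=t] aa_1 bb_1 by (simp add: numeral_2_eq_2)
  have b2: "?b 2 = p*t*(v*s*t)" using bb_rec[where n=1 and p=p and q=q and v=v and s=s and t=t] aa_1 bb_1 by (simp add: numeral_2_eq_2)
  have f2: "?f 2 = u * ?a 2 + u^2 * ?b 2" using ff_Suc[where n=1 and p=p and q=q and u=u and v=v and s=s and t=t] by (simp add: numeral_2_eq_2)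
  have a3: "?a 3 = q*v*s*(?a 2 + ?b 2)" using aa_rec[where n=2 and p=p and q=q and v=v and s=s and t=t] by (simp add: numeral_3_eq_3 numeral_2_eq_2)
  have b3: "?b 3 = p * ?a 2 + q*s*?b 2" using bb_rec[where n=2 and p=p and q=q and v=v and s=s and t=t] by (simp add: numeral_3_eq_3 numeral_2_eq_2)
  have f3: "?f 3 = u * ?a 3 + u^2 * ?b 3" using ff_Suc[where n=2 and p=p and q=q and u=u and v=v and s=s and t=t] by (simp add: numeral_3_eq_3 numeral_2_eq_2)
  show ?thesis
  proof (rule fps_ext)
    fix m
    have L: "(?G * (1 - fps_const tr * fps_X + fps_const dt * fps_X^2)) $ m
      = ?f m - tr * (if m = 0 then 0 else ?f (m - 1)) + dt * (if m < 2 then 0 else ?f (m - 2))"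
      unfolding e by (simp add: fps_X_power_mult_nth)
    have R: "(1 + fps_const n1 * fps_X + fps_const n2 * fps_X^2 + fps_const n3 * fps_X^3 :: complex fps) $ m
      = (if m = 0 then 1 else 0) + (if m = 1 then n1 else 0) + (if m = 2 then n2 else 0) + (if m = 3 then n3 else 0)"
      by simp
    have cs: "m = 0 \<or> m = 1 \<or> m = 2 \<or> m = 3 \<or> (m = Suc (Suc (m - 2)) \<and> 2 \<le> m - 2)" by arith
    then show "(?G * (1 - fps_const tr * fps_X + fps_const dt * fps_X^2)) $ m
      = (1 + fps_const n1 * fps_X + fps_const n2 * fps_X^2 + fps_const n3 * fps_X^3) $ m"
    proof (elim disjE conjE)
      assume "m = 0" then show ?thesis unfolding L R using f0 by simp
    next
      assume "m = 1" then show ?thesis unfolding L R using f0 f1 by (simp add: n1_def tr_def algebra_simps)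
    next
      assume "m = 2" then show ?thesis unfolding L R using f0 f1 f2 a2 b2
        by (simp add: n2_def tr_def dt_def algebra_simps power2_eq_square)
    next
      assume "m = 3" then show ?thesis unfolding L R using f1 f2 f3 a2 b2 a3 b3
        by (simp add: n3_def tr_def dt_def algebra_simps power2_eq_square)
    next
      assume h: "m = Suc (Suc (m - 2))" "2 \<le> m - 2"
      define k where "k = m - 2"
      have k: "m = Suc (Suc k)" "2 \<le> k" using h unfolding k_def by simp_all
      show ?thesis unfolding L R unfolding k using ff_rec[OF k(2), of p q u v s t] k(2)
        by (simp add: tr_def dt_def)
    qed
  qed
qed


theorem theorem3:
  fixes p q u v s t :: complex
  defines "x \<equiv> (fps_X :: complex fps)"
      and "P \<equiv> fps_const p" and "Q \<equiv> fps_const q" and "U \<equiv> fps_const u"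
      and "V \<equiv> fps_const v" and "S \<equiv> fps_const s" and "T \<equiv> fps_const t"
  shows "F_123_132 p q u v s t =
    (1 + Q^2 * S^2 * V * x^2 + S * T * U * V * x * (1 + P * T * U * x)
       - Q * S * x * (1 + P * U * V^2 * x^2 * S * T * (-1 + T) * (-1 + U) + V * (1 + P * x + S * T * U * x)))
    / (1 + Q^2 * S^2 * V * x^2 - Q * S * x * (1 + V + P * V * x))"
proof -
  define tr where "tr = q*s*(1+v)"
  define dt where "dt = q^2*s^2*v - q*s*p*v"
  define n1 where "n1 = s*t*u*v - q*s*(1+v)"
  define n2 where "n2 = q^2*s^2*v + s*t*u*v*p*t*u - q*s*v*(p + s*t*u)"
  define n3 where "n3 = - (q*s*p*u*v^2*s*t*(t-1)*(u-1))"
  have den: "(1 + Q^2 * S^2 * V * x^2 - Q * S * x * (1 + V + P * V * x)) = 1 - fps_const tr * x + fps_const dt * x^2"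
  proof -
    have "(1 + Q^2 * S^2 * V * x^2 - Q * S * x * (1 + V + P * V * x)) = 1 - (Q*S*(1+V)) * x + (Q^2*S^2*V - Q*S*P*V) * x^2"
      by (simp add: algebra_simps power2_eq_square)
    also have "Q*S*(1+V) = fps_const tr" unfolding Q_def S_def V_def tr_def by (simp add: algebra_simps)
    also have "Q^2*S^2*V - Q*S*P*V = fps_const dt" unfolding Q_def S_def V_def P_def dt_def
      by (simp add: algebra_simps fps_const_power)
    finally show ?thesis .
  qed
  have num: "1 + Q^2 * S^2 * V * x^2 + S * T * U * V * x * (1 + P * T * U * x)
       - Q * S * x * (1 + P * U * V^2 * x^2 * S * T * (-1 + T) * (-1 + U) + V * (1 + P * x + S * T * U * x))
     = 1 + fps_const n1 * x + fps_const n2 * x^2 + fps_const n3 * x^3"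
  proof -
    have "1 + Q^2 * S^2 * V * x^2 + S * T * U * V * x * (1 + P * T * U * x)
       - Q * S * x * (1 + P * U * V^2 * x^2 * S * T * (-1 + T) * (-1 + U) + V * (1 + P * x + S * T * U * x))
     = 1 + (S*T*U*V - Q*S*(1+V)) * x + (Q^2*S^2*V + S*T*U*V*P*T*U - Q*S*V*(P + S*T*U)) * x^2
         + (- (Q*S*P*U*V^2*S*T*(T-1)*(U-1))) * x^3"
      by (simp add: algebra_simps power2_eq_square power3_eq_cube)
    also have "S*T*U*V - Q*S*(1+V) = fps_const n1"
      unfolding Q_def S_def V_def T_def U_def n1_def by (simp add: algebra_simps)
    also have "Q^2*S^2*V + S*T*U*V*P*T*U - Q*S*V*(P + S*T*U) = fps_const n2"
      unfolding Q_def S_def V_def T_def U_def P_def n2_def by (simp add: algebra_simps fps_const_power)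
    also have "- (Q*S*P*U*V^2*S*T*(T-1)*(U-1)) = fps_const n3"
      unfolding Q_def S_def V_def T_def U_def P_def n3_def by (simp add: algebra_simps fps_const_power)
    finally show ?thesis .
  qed
  have M: "Abs_fps (ff p q u v s t) * (1 - fps_const tr * x + fps_const dt * x^2)
     = 1 + fps_const n1 * x + fps_const n2 * x^2 + fps_const n3 * x^3"
    unfolding x_def tr_def dt_def n1_def n2_def n3_def by (rule main_mult)
  have nz: "(1 - fps_const tr * x + fps_const dt * x^2 :: complex fps) \<noteq> 0"
  proof
    assume "(1 - fps_const tr * x + fps_const dt * x^2 :: complex fps) = 0"
    then have "(1 - fps_const tr * x + fps_const dt * x^2 :: complex fps) $ 0 = 0" by simp
    then show False unfolding x_def by (simp add: fps_X_power_mult_nth)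
  qed
  show ?thesis unfolding den num F_eq M[symmetric] using nz by simp
qed

end
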